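(* Let $(A,\leq,\cdot,/)$ be a right-residuated magma satisfying condition (N). The following are equivalent: (1) $x/x = y/y$ for all $x,y\in A$; (2) $(x/x)y = y$ for all $x,y\in A$; (3) there exists $e\in A$ with $ey=y$ for all $y\in A$. When these hold, the element $1:=x/x$ (independent of $x$) is a left identity element, and $e\leq 1$ for every left identity element $e$ of $A$ (so $1$ is the maximum left identity).
   Context: Write $xy$ for $x\cdot y$; $\cdot$ binds more strongly than $/$, and $/$ binds more strongly than $\sqcap$, where $x\sqcap y := (x/y)y$. A right-residuated magma is a structure $(A,\leq,\cdot,/)$ where $(A,\leq)$ is a poset and $xy\leq z\iff x\leq z/y$ for all $x,y,z\in A$. Condition (N): for all $x,y\in A$, $x\leq y\iff x = y\sqcap x$. An element $e$ is a left identity if $ey=y$ for all $y$. *)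

theory Defs
  imports Main
begin

definition right_residuated_magma ::
  "('a \<Rightarrow> 'a \<Rightarrow> bool) \<Rightarrow> ('a \<Rightarrow> 'a \<Rightarrow> 'a) \<Rightarrow> ('a \<Rightarrow> 'a \<Rightarrow> 'a) \<Rightarrow> bool" where
  "right_residuated_magma le m d \<longleftrightarrow>
     (\<forall>x. le x x) \<and>
     (\<forall>x y. le x y \<and> le y x \<longrightarrow> x = y) \<and>
     (\<forall>x y z. le x y \<and> le y z \<longrightarrow> le x z) \<and>
     (\<forall>x y z. le (m x y) z \<longleftrightarrow> le x (d z y))"

definition rmeet :: "('a \<Rightarrow> 'a \<Rightarrow> 'a) \<Rightarrow> ('a \<Rightarrow> 'a \<Rightarrow> 'a) \<Rightarrow> 'a \<Rightarrow> 'a \<Rightarrow> 'a" where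
  "rmeet m d x y = m (d x y) y"

definition condN ::
  "('a \<Rightarrow> 'a \<Rightarrow> bool) \<Rightarrow> ('a \<Rightarrow> 'a \<Rightarrow> 'a) \<Rightarrow> ('a \<Rightarrow> 'a \<Rightarrow> 'a) \<Rightarrow> bool" where
  "condN le m d \<longleftrightarrow> (\<forall>x y. le x y \<longleftrightarrow> x = rmeet m d y x)"

definition left_identity :: "('a \<Rightarrow> 'a \<Rightarrow> 'a) \<Rightarrow> 'a \<Rightarrow> bool" where
  "left_identity m e \<longleftrightarrow> (\<forall>y. m e y = y)"

end

theory Submission
  imports Defs
begin

lemma key:
  assumes refl: "\<And>x. le x x" and anti: "\<And>x y. le x y \<Longrightarrow> le y x \<Longrightarrow> x = y"
  and tr: "\<And>x y z. le x y \<Longrightarrow> le y z \<Longrightarrow> le x z"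
  and res: "\<And>x y z. le (m x y) z = le x (d z y)"
  and N: "\<And>x y. le x y = (x = m (d y x) x)"
  and e: "\<And>y. m e y = y"
shows "m (d x x) y = y"
  by (metis e N res anti refl tr)

theorem mainTheorem7:
  fixes le :: "'a \<Rightarrow> 'a \<Rightarrow> bool" and m d :: "'a \<Rightarrow> 'a \<Rightarrow> 'a"
  assumes "right_residuated_magma le m d"
    and "condN le m d"
  shows "((\<forall>x y. d x x = d y y) \<longleftrightarrow> (\<forall>x y. m (d x x) y = y))
       \<and> ((\<forall>x y. m (d x x) y = y) \<longleftrightarrow> (\<exists>e. left_identity m e))
       \<and> ((\<forall>x y. d x x = d y y) \<longrightarrow>
            (\<forall>x. left_identity m (d x x)) \<and>
            (\<forall>e x. left_identity m e \<longrightarrow> le e (d x x)))"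
proof -
  have refl: "\<And>x. le x x" and anti: "\<And>x y. le x y \<Longrightarrow> le y x \<Longrightarrow> x = y"
  and tr: "\<And>x y z. le x y \<Longrightarrow> le y z \<Longrightarrow> le x z"
  and res: "\<And>x y z. le (m x y) z = le x (d z y)"
    using assms(1) unfolding right_residuated_magma_def by blast+
  have N: "\<And>x y. le x y = (x = m (d y x) x)"
    using assms(2) unfolding condN_def rmeet_def by blast
  have self: "\<And>x. m (d x x) x = x" using N refl by metis
  have A: "(\<forall>x y. d x x = d y y) \<Longrightarrow> (\<forall>x y. m (d x x) y = y)"
    by (metis self)
  have B: "d x x = d y y" if h: "\<forall>x y. m (d x x) y = y" for x y
  proof (rule anti)
    show "le (d x x) (d y y)" using h res refl by metis
    show "le (d y y) (d x x)" using h res refl by metis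
  qed
  have C: "m (d x x) y = y" if h: "\<exists>e. left_identity m e" for x y
  proof -
    obtain e where "\<And>y. m e y = y" using h unfolding left_identity_def by blast
    then show ?thesis using key[of le m d e x y] refl anti tr res N by blast
  qed
  have D: "\<And>e x. left_identity m e \<Longrightarrow> le e (d x x)"
    unfolding left_identity_def using res refl by metis
  show ?thesis using A B C D unfolding left_identity_def by (metis (no_types))
qed

end
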